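(* Let $p>q\geq 2$ be relatively prime integers with $p\geq 2q-1$. For every $d\in A_q$ let $k_d\in A_p$ and $j_d\in A_q$ be the unique elements with $k_dq\equiv d\pmod p$ and $k_dq=j_dp+d$. If $wab\in L(q,p)$ for some word $w$ over $A_{pq}$ and digits $a,b\in A_{pq}$ with $a\equiv k_d\pmod p$, then $b\equiv j_d\pmod q$.
   Context: For an integer $n>1$, $A_n=\{0,1,\dots,n-1\}$. For relatively prime integers $r,s\geq2$ define $g_{r,s}:A_{rs}\times A_{rs}\to A_{rs}$ by writing $x=x_1s+x_0$, $y=y_1s+y_0$ with $x_0,y_0\in A_s$, $x_1,y_1\in A_r$ (uniquely), and $g_{r,s}(x,y)=x_0r+y_1$; and $F_{r,s}:A_{rs}^{\mathbb{Z}}\to A_{rs}^{\mathbb{Z}}$ by $F_{r,s}(c)(i)=g_{r,s}(g_{r,s}(c(i-1),c(i)),g_{r,s}(c(i),c(i+1)))$. $F_{r,s}$ is a bijection with inverse $F_{s,r}$, so $F_{r,s}^n$ is defined for $n\in\mathbb{Z}$. The trace is $\mathrm{tr}_{r,s}(c)=(F_{r,s}^n(c)(1))_{n\in\mathbb{Z}}$, and $L(r,s)$ is the set of all finite words $u(1)\cdots u(m)$ ($m\geq0$) over $A_{rs}$ such that for some $c\in A_{rs}^{\mathbb{Z}}$ and $n_0\in\mathbb{Z}$ we have $u(j)=\mathrm{tr}_{r,s}(c)(n_0+j)$ for $1\leq j\leq m$. Here $L(q,p)$ refers to traces with respect to $F_{q,p}$. *)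

theory Defs
  imports Main
begin

text \<open>Alphabet A_n = {0,...,n-1} is represented by natural numbers below n.
  Configurations are functions int => nat with all values below r*s.\<close>

definition g :: "nat \<Rightarrow> nat \<Rightarrow> nat \<Rightarrow> nat \<Rightarrow> nat" where
  "g r s x y = (x mod s) * r + y div s"

definition configs :: "nat \<Rightarrow> nat \<Rightarrow> (int \<Rightarrow> nat) set" where
  "configs r s = {c. \<forall>i. c i < r * s}"

definition F :: "nat \<Rightarrow> nat \<Rightarrow> (int \<Rightarrow> nat) \<Rightarrow> (int \<Rightarrow> nat)" where
  "F r s c = (\<lambda>i. g r s (g r s (c (i - 1)) (c i)) (g r s (c i) (c (i + 1))))"

definition Fpow :: "nat \<Rightarrow> nat \<Rightarrow> int \<Rightarrow> (int \<Rightarrow> nat) \<Rightarrow> (int \<Rightarrow> nat)" where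
  "Fpow r s n = (if 0 \<le> n then (F r s) ^^ (nat n)
                 else (inv_into (configs r s) (F r s)) ^^ (nat (- n)))"

definition tr :: "nat \<Rightarrow> nat \<Rightarrow> (int \<Rightarrow> nat) \<Rightarrow> int \<Rightarrow> nat" where
  "tr r s c = (\<lambda>n. Fpow r s n c 1)"

definition L :: "nat \<Rightarrow> nat \<Rightarrow> nat list set" where
  "L r s = {u. \<exists>c \<in> configs r s. \<exists>n0::int.
              \<forall>j \<in> {1..length u}. u ! (j - 1) = tr r s c (n0 + int j)}"

end

theory Submission
  imports Defs
begin

definition Gm :: "nat \<Rightarrow> nat \<Rightarrow> (int \<Rightarrow> nat) \<Rightarrow> (int \<Rightarrow> nat)" where
  "Gm r s c = (\<lambda>i. g r s (c i) (c (i + 1)))"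

lemma g_lt: assumes "y < r * s" "0 < r" shows "g r s x y < r * s"
proof -
  have s0: "0 < s" using assms by (cases s) auto
  have "y div s < r" using assms s0 by (simp add: div_less_iff_less_mult mult.commute)
  moreover have "x mod s < s" using s0 by simp
  ultimately have "(x mod s) * r + y div s < (x mod s) * r + r" by simp
  also have "\<dots> = (x mod s + 1) * r" by simp
  also have "\<dots> \<le> s * r" using \<open>x mod s < s\<close> by (intro mult_right_mono) auto
  finally show ?thesis by (simp add: g_def mult.commute)
qed

lemma configs_sym: "configs r s = configs s r"
  by (simp add: configs_def mult.commute)

lemma Gm_configs: assumes "c \<in> configs r s" "0 < r" shows "Gm r s c \<in> configs r s"
  using assms g_lt by (auto simp: configs_def Gm_def)

lemma gg: assumes "y < r * s" "z < r * s" shows "g s r (g r s x y) (g r s y z) = y"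
proof -
  have s0: "0 < s" using assms by (cases s) auto
  have r0: "0 < r" using assms by (cases r) auto
  have yr: "y div s < r" using assms s0 by (simp add: div_less_iff_less_mult mult.commute)
  have zr: "z div s < r" using assms s0 by (simp add: div_less_iff_less_mult mult.commute)
  have a: "((x mod s) * r + y div s) mod r = y div s" using yr by simp
  have b: "((y mod s) * r + z div s) div r = y mod s" using r0 zr by simp
  show ?thesis unfolding g_def a b by simp
qed

lemma GG: assumes "c \<in> configs r s" shows "Gm s r (Gm r s c) = (\<lambda>i. c (i + 1))"
  using assms by (auto simp: Gm_def configs_def gg)

lemma Gm_shift: "Gm r s (\<lambda>i. c (i + 1)) = (\<lambda>i. Gm r s c (i + 1))"
  by (simp add: Gm_def)

lemma F_Gm: "F r s c = (\<lambda>i. Gm r s (Gm r s c) (i - 1))"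
  by (simp add: F_def Gm_def add.commute)

lemma F_configs: assumes "c \<in> configs r s" "0 < r" shows "F r s c \<in> configs r s"
  using Gm_configs[OF Gm_configs[OF assms] \<open>0<r\<close>] by (auto simp: F_Gm configs_def)

lemma F_surj: assumes "y \<in> configs r s" "0 < r" "0 < s" shows "y \<in> F r s ` configs r s"
proof -
  define e where "e = (\<lambda>i. y (i - 1))"
  have e: "e \<in> configs s r" using assms by (auto simp: e_def configs_def mult.commute)
  have e1: "Gm s r e \<in> configs s r" using Gm_configs[OF e] assms by simp
  have e2: "Gm s r (Gm s r e) \<in> configs r s" using Gm_configs[OF e1] assms configs_sym by metis
  have "Gm r s (Gm s r (Gm s r e)) = (\<lambda>i. Gm s r e (i + 1))" using GG[OF e1] .
  also have "\<dots> = Gm s r (\<lambda>i. e (i + 1))" by (simp add: Gm_shift)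
  finally have "Gm r s (Gm r s (Gm s r (Gm s r e))) = Gm r s (Gm s r (\<lambda>i. e (i + 1)))" by simp
  also have "\<dots> = (\<lambda>i. e (i + 2))" using GG[of "\<lambda>i. e (i + 1)" s r] e
    by (auto simp: configs_def add.assoc)
  finally have "F r s (Gm s r (Gm s r e)) = y" by (simp add: F_Gm e_def)
  with e2 show ?thesis by blast
qed

lemma Fpow_props: assumes "c \<in> configs r s" "0 < r" "0 < s"
  shows "Fpow r s n c \<in> configs r s \<and> F r s (Fpow r s n c) = Fpow r s (n + 1) c"
proof (cases "0 \<le> n")
  case True
  have cf: "\<And>m. (F r s ^^ m) c \<in> configs r s"
  proof -
    fix m show "(F r s ^^ m) c \<in> configs r s"
      by (induction m) (auto simp: assms F_configs)
  qed
  have "nat (n + 1) = Suc (nat n)" using True by simp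
  then show ?thesis using True cf by (simp add: Fpow_def)
next
  case False
  let ?I = "inv_into (configs r s) (F r s)"
  have ci: "\<And>m. (?I ^^ m) c \<in> configs r s"
  proof -
    fix m show "(?I ^^ m) c \<in> configs r s"
      by (induction m) (auto simp: assms inv_into_into F_surj)
  qed
  obtain m where m: "nat (- n) = Suc m" using False by (cases "nat (- n)") auto
  have "F r s ((?I ^^ nat (- n)) c) = (?I ^^ m) c"
    using m ci[of m] by (simp add: f_inv_into_f F_surj assms)
  moreover have "n + 1 < 0 \<longrightarrow> nat (- (n + 1)) = m" "n + 1 = 0 \<longrightarrow> m = 0" using m False by auto
  ultimately show ?thesis using False ci by (auto simp: Fpow_def)
qed

lemma local5:
  fixes p q d k j :: nat
  assumes "p \<ge> 2 * q - 1" "q \<ge> 2" "d < q" "k * q = j * p + d" "j < q"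
    and "c \<in> configs q p" "c 1 mod p = k"
  shows "F q p c 1 mod q = j"
proof -
  have p0: "0 < p" using assms by simp
  have c2: "c 2 < q * p" using assms(6) by (simp add: configs_def)
  have t: "c 2 div p < q" using c2 p0 by (simp add: div_less_iff_less_mult)
  have dt: "d + c 2 div p < p" using t assms by linarith
  have v: "g q p (c 1) (c 2) = j * p + (d + c 2 div p)" using assms by (simp add: g_def)
  have vd: "g q p (c 1) (c 2) div p = j" unfolding v using dt p0 by simp
  have "F q p c 1 = (g q p (c 0) (c 1) mod p) * q + j"
    by (simp add: F_def vd[symmetric]) (simp add: g_def)
  then show ?thesis using assms by simp
qed

theorem lemma5:
  fixes p q d k j a b :: nat and w :: "nat list"
  assumes "p > q" and "q \<ge> 2" and "coprime p q" and "p \<ge> 2 * q - 1"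
    and "d < q"
    and "k < p" and "j < q" and "(k * q) mod p = d mod p" and "k * q = j * p + d"
    and "\<forall>x \<in> set w. x < p * q" and "a < p * q" and "b < p * q"
    and "a mod p = k mod p"
    and "w @ [a, b] \<in> L q p"
  shows "b mod q = j mod q"
proof -
  obtain c n0 where c: "c \<in> configs q p" and
    h: "\<forall>i \<in> {1..length (w @ [a, b])}. (w @ [a, b]) ! (i - 1) = tr q p c (n0 + int i)"
    using assms(14) unfolding L_def by blast
  let ?m = "length w"
  have ha: "a = tr q p c (n0 + int (?m + 1))" using h[rule_format, of "?m + 1"] by simp
  have hb: "b = tr q p c (n0 + int (?m + 1) + 1)" using h[rule_format, of "?m + 2"]
    by (simp add: nth_append add.assoc)
  define c' where "c' = Fpow q p (n0 + int (?m + 1)) c"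
  have P: "c' \<in> configs q p" "F q p c' = Fpow q p (n0 + int (?m + 1) + 1) c"
    using Fpow_props[OF c] assms unfolding c'_def by auto
  have "c' 1 mod p = k" using ha assms by (simp add: tr_def c'_def)
  then have "F q p c' 1 mod q = j" using local5[OF assms(4) assms(2) assms(5) assms(9) assms(7) P(1)] by simp
  then show ?thesis using hb P(2) assms by (simp add: tr_def)
qed

end
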